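(* Let $A\in\mathbb{R}^{m\times N}$ with $N=pn$. Let $1<q_2\le q_1\le\infty$ and set $\tilde q=\frac{q_2(q_1-1)}{q_1(q_2-1)}$ (with $\tilde q=\frac{q_2}{q_2-1}$ when $q_1=\infty$). Then for any real number $s$ with $1\le s\le p^{1/\tilde q}$, $$\beta_{q_1,s}(A)\ \ge\ \beta_{q_2,s^{\tilde q}}(A)\ \ge\ s^{-\tilde q}\,\beta_{q_1,s^{\tilde q}}(A).$$
   Context: Every $\mathbf{x}\in\mathbb{R}^N$ is partitioned into $p$ consecutive blocks of length $n$: $\mathbf{x}=[\mathbf{x}_1^T,\dots,\mathbf{x}_p^T]^T$, $\mathbf{x}_i\in\mathbb{R}^n$. Mixed norms: $\lVert\mathbf{x}\rVert_{2,q}=(\sum_{i=1}^p\lVert\mathbf{x}_i\rVert_2^q)^{1/q}$ for $0<q<\infty$, $\lVert\mathbf{x}\rVert_{2,\infty}=\max_i\lVert\mathbf{x}_i\rVert_2$. For nonzero $\mathbf{x}$ and $q\in(1,\infty)$ the $q$-ratio block sparsity is $k_q(\mathbf{x})=\left(\lVert\mathbf{x}\rVert_{2,1}/\lVert\mathbf{x}\rVert_{2,q}\right)^{q/(q-1)}$, and $k_\infty(\mathbf{x})=\lVert\mathbf{x}\rVert_{2,1}/\lVert\mathbf{x}\rVert_{2,\infty}$. For $s\in[1,p]$ and $q\in(1,\infty]$, the $q$-ratio block constrained minimal singular value of $A$ is $$\beta_{q,s}(A)=\min_{\mathbf{z}\neq\mathbf{0},\ k_q(\mathbf{z})\le s}\frac{\lVert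 A\mathbf{z}\rVert_2}{\lVert\mathbf{z}\rVert_{2,q}}.$$ *)

theory Defs
  imports "HOL-Library.Extended_Real"
begin

text \<open>Vectors in R^N, N = p*n, are functions nat => real that vanish at indices >= p*n.
  Block i (i < p) consists of the entries i*n + j, j < n.  A real m x N matrix is a
  function nat => nat => real, entry A r c for r < m, c < p*n.\<close>

definition is_vec :: "nat \<Rightarrow> (nat \<Rightarrow> real) \<Rightarrow> bool" where
  "is_vec N x \<longleftrightarrow> (\<forall>i\<ge>N. x i = 0)"

definition block_norm :: "nat \<Rightarrow> (nat \<Rightarrow> real) \<Rightarrow> nat \<Rightarrow> real" where
  "block_norm n x i = sqrt (\<Sum>j<n. (x (i * n + j))\<^sup>2)"

definition mixed_norm :: "nat \<Rightarrow> nat \<Rightarrow> ereal \<Rightarrow> (nat \<Rightarrow> real) \<Rightarrow> real" where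
  "mixed_norm p n q x =
     (if q = \<infinity> then Max ((\<lambda>i. block_norm n x i) ` {..<p})
      else (\<Sum>i<p. block_norm n x i powr real_of_ereal q) powr (1 / real_of_ereal q))"

definition q_ratio_sparsity :: "nat \<Rightarrow> nat \<Rightarrow> ereal \<Rightarrow> (nat \<Rightarrow> real) \<Rightarrow> real" where
  "q_ratio_sparsity p n q x =
     (if q = \<infinity> then mixed_norm p n 1 x / mixed_norm p n \<infinity> x
      else (mixed_norm p n 1 x / mixed_norm p n q x)
             powr (real_of_ereal q / (real_of_ereal q - 1)))"

definition mat_vec_norm :: "nat \<Rightarrow> nat \<Rightarrow> (nat \<Rightarrow> nat \<Rightarrow> real) \<Rightarrow> (nat \<Rightarrow> real) \<Rightarrow> real" where
  "mat_vec_norm m N A z = sqrt (\<Sum>r<m. (\<Sum>c<N. A r c * z c)\<^sup>2)"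

text \<open>q-ratio block constrained minimal singular value (the minimum is written as an infimum;
  it is attained).\<close>
definition beta :: "nat \<Rightarrow> nat \<Rightarrow> nat \<Rightarrow> (nat \<Rightarrow> nat \<Rightarrow> real) \<Rightarrow> ereal \<Rightarrow> real \<Rightarrow> real" where
  "beta m p n A q s =
     Inf {mat_vec_norm m (p * n) A z / mixed_norm p n q z | z.
            is_vec (p * n) z \<and> z \<noteq> (\<lambda>_. 0) \<and> q_ratio_sparsity p n q z \<le> s}"

definition qtilde :: "ereal \<Rightarrow> ereal \<Rightarrow> real" where
  "qtilde q1 q2 =
     (if q1 = \<infinity> then (if q2 = \<infinity> then 1
                        else real_of_ereal q2 / (real_of_ereal q2 - 1))
      else real_of_ereal q2 * (real_of_ereal q1 - 1) /
             (real_of_ereal q1 * (real_of_ereal q2 - 1)))"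

end

theory Submission
  imports Defs "HOL-Analysis.Analysis"
begin


lemma R1:
  fixes w :: "'a \<Rightarrow> real"
  assumes fin: "finite I" and nn: "\<And>i. i \<in> I \<Longrightarrow> 0 \<le> w i" and r1: "0 < r1" and r12: "r1 \<le> r2"
  shows "(\<Sum>i\<in>I. w i powr r2) powr (1/r2) \<le> (\<Sum>i\<in>I. w i powr r1) powr (1/r1)"
proof -
  define N where "N = (\<Sum>i\<in>I. w i powr r1) powr (1/r1)"
  have S0: "0 \<le> (\<Sum>i\<in>I. w i powr r1)" by (intro sum_nonneg) simp
  have N0: "0 \<le> N" unfolding N_def by simp
  have NS: "N powr r1 = (\<Sum>i\<in>I. w i powr r1)"
    unfolding N_def powr_powr using r1 S0 by simp
  have wle: "w i \<le> N" if "i \<in> I" for i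
  proof -
    have "w i powr r1 \<le> (\<Sum>i\<in>I. w i powr r1)"
      by (rule member_le_sum) (use that fin in auto)
    then have h: "w i powr r1 \<le> N powr r1" using NS by simp
    have "(w i powr r1) powr (1/r1) \<le> (N powr r1) powr (1/r1)"
      by (rule powr_mono2) (use r1 h in auto)
    moreover have "(w i powr r1) powr (1/r1) = w i" using r1 nn[OF that] by (simp add: powr_powr)
    moreover have "(N powr r1) powr (1/r1) = N" using r1 N0 by (simp add: powr_powr)
    ultimately show ?thesis by simp
  qed
  have "(\<Sum>i\<in>I. w i powr r2) = (\<Sum>i\<in>I. w i powr r1 * w i powr (r2 - r1))"
    by (intro sum.cong refl) (simp flip: powr_add)
  also have "\<dots> \<le> (\<Sum>i\<in>I. w i powr r1 * N powr (r2 - r1))"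
    by (intro sum_mono mult_left_mono powr_mono2) (use r12 nn wle in auto)
  also have "\<dots> = N powr r1 * N powr (r2 - r1)" by (simp add: NS sum_distrib_right)
  also have "\<dots> = N powr r2" by (simp flip: powr_add)
  finally have "(\<Sum>i\<in>I. w i powr r2) powr (1/r2) \<le> (N powr r2) powr (1/r2)"
    by (intro powr_mono2) (use r1 r12 in \<open>auto intro: sum_nonneg\<close>)
  also have "\<dots> = N" using r1 r12 N0 by (simp add: powr_powr)
  finally show ?thesis unfolding N_def .
qed

lemma R1inf:
  fixes w :: "'a \<Rightarrow> real"
  assumes fin: "finite I" and nn: "\<And>i. i \<in> I \<Longrightarrow> 0 \<le> w i" and r1: "0 < r1" and i: "i \<in> I"
  shows "w i \<le> (\<Sum>i\<in>I. w i powr r1) powr (1/r1)"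
proof -
  have "w i powr r1 \<le> (\<Sum>i\<in>I. w i powr r1)"
    by (rule member_le_sum) (use i fin in auto)
  then have "(w i powr r1) powr (1/r1) \<le> (\<Sum>i\<in>I. w i powr r1) powr (1/r1)"
    by (intro powr_mono2) (use r1 in auto)
  moreover have "(w i powr r1) powr (1/r1) = w i" using r1 nn[OF i] by (simp add: powr_powr)
  ultimately show ?thesis by simp
qed

lemma R2pos:
  fixes w :: "'a \<Rightarrow> real"
  assumes fin: "finite I" and ne: "I \<noteq> {}" and pos: "\<And>i. i \<in> I \<Longrightarrow> 0 < w i"
    and r1: "1 < r1" and r12: "r1 \<le> r2"
  shows "((\<Sum>i\<in>I. w i powr r1) / (\<Sum>i\<in>I. w i)) powr (1/(r1-1))
       \<le> ((\<Sum>i\<in>I. w i powr r2) / (\<Sum>i\<in>I. w i)) powr (1/(r2-1))"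
proof -
  define a where "a = (\<Sum>i\<in>I. w i)"
  define \<rho> where "\<rho> = (r2 - 1) / (r1 - 1)"
  have a0: "0 < a" unfolding a_def using fin ne pos by (intro sum_pos) auto
  have rho: "1 \<le> \<rho>" unfolding \<rho>_def using r1 r12 by simp
  have wr: "w i * w i powr (r - 1) = w i powr r" if "i \<in> I" for i r
  proof -
    have "w i powr r = w i powr (1 + (r - 1))" by simp
    also have "\<dots> = w i * w i powr (r - 1)" unfolding powr_add using pos[OF that] by simp
    finally show ?thesis by simp
  qed
  have J: "(\<lambda>y. y powr \<rho>) (\<Sum>i\<in>I. (w i / a) *\<^sub>R (w i powr (r1 - 1)))
      \<le> (\<Sum>i\<in>I. (w i / a) * (\<lambda>y. y powr \<rho>) (w i powr (r1 - 1)))"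
  proof (rule convex_on_sum[OF fin ne powr_convex[OF rho]])
    show "(\<Sum>i\<in>I. w i / a) = 1" using a0 by (simp add: a_def flip: sum_divide_distrib)
    show "0 \<le> w i / a" if "i \<in> I" for i using pos[OF that] a0 by simp
    show "w i powr (r1 - 1) \<in> {0<..}" if "i \<in> I" for i using pos[OF that] by simp
  qed
  have L: "(\<Sum>i\<in>I. (w i / a) *\<^sub>R (w i powr (r1 - 1))) = (\<Sum>i\<in>I. w i powr r1) / a"
    by (simp add: sum_divide_distrib wr)
  have "(\<Sum>i\<in>I. (w i / a) * (w i powr (r1 - 1)) powr \<rho>) = (\<Sum>i\<in>I. (w i / a) * w i powr (r2 - 1))"
    using r1 by (intro sum.cong refl) (simp add: powr_powr \<rho>_def)
  also have "\<dots> = (\<Sum>i\<in>I. w i powr r2) / a"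
    by (simp add: sum_divide_distrib wr)
  finally have "((\<Sum>i\<in>I. w i powr r1) / a) powr \<rho> \<le> (\<Sum>i\<in>I. w i powr r2) / a"
    using J L by simp
  then have "(((\<Sum>i\<in>I. w i powr r1) / a) powr \<rho>) powr (1/(r2-1)) \<le> ((\<Sum>i\<in>I. w i powr r2) / a) powr (1/(r2-1))"
    by (intro powr_mono2) (use r1 r12 in auto)
  moreover have "\<rho> * (1/(r2-1)) = 1/(r1-1)" unfolding \<rho>_def using r1 r12 by simp
  ultimately show ?thesis unfolding a_def[symmetric] by (simp add: powr_powr)
qed

lemma R2:
  fixes w :: "'a \<Rightarrow> real"
  assumes fin: "finite I" and nn: "\<And>i. i \<in> I \<Longrightarrow> 0 \<le> w i" and a0: "0 < (\<Sum>i\<in>I. w i)"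
    and r1: "1 < r1" and r12: "r1 \<le> r2"
  shows "((\<Sum>i\<in>I. w i powr r1) / (\<Sum>i\<in>I. w i)) powr (1/(r1-1))
       \<le> ((\<Sum>i\<in>I. w i powr r2) / (\<Sum>i\<in>I. w i)) powr (1/(r2-1))"
proof -
  define J where "J = {i\<in>I. 0 < w i}"
  have JI: "J \<subseteq> I" and finJ: "finite J" using fin unfolding J_def by auto
  have z: "w i = 0" if "i \<in> I - J" for i using that nn unfolding J_def by force
  have eq: "(\<Sum>i\<in>I. w i powr r) = (\<Sum>i\<in>J. w i powr r)" for r
    by (rule sum.mono_neutral_right[OF fin JI]) (simp add: z)
  have eq1: "(\<Sum>i\<in>I. w i) = (\<Sum>i\<in>J. w i)"
    by (rule sum.mono_neutral_right[OF fin JI]) (simp add: z)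
  have "J \<noteq> {}" using a0 eq1 by auto
  from R2pos[OF finJ this _ r1 r12, of w] show ?thesis unfolding eq eq1 J_def by auto
qed

lemma R2inf:
  fixes w :: "'a \<Rightarrow> real"
  assumes fin: "finite I" and nn: "\<And>i. i \<in> I \<Longrightarrow> 0 \<le> w i" and a0: "0 < (\<Sum>i\<in>I. w i)"
    and M: "\<And>i. i \<in> I \<Longrightarrow> w i \<le> M" and r: "1 < r"
  shows "((\<Sum>i\<in>I. w i powr r) / (\<Sum>i\<in>I. w i)) powr (1/(r-1)) \<le> M"
proof -
  define a where "a = (\<Sum>i\<in>I. w i)"
  have M0: "0 \<le> M" using a0 nn M
    by (metis (no_types, lifting) not_less order.trans sum.neutral sum_nonneg linorder_not_le order_less_irrefl)
  have wr: "w i powr r = w i * w i powr (r - 1)" if "i \<in> I" for i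
  proof -
    have "w i powr r = w i powr (1 + (r - 1))" by simp
    also have "\<dots> = \<bar>w i\<bar> * w i powr (r - 1)" unfolding powr_add by simp
    finally show ?thesis
      using nn[OF that] by simp
  qed
  have "(\<Sum>i\<in>I. w i powr r) = (\<Sum>i\<in>I. w i * w i powr (r - 1))" by (intro sum.cong refl) (simp add: wr)
  also have "\<dots> \<le> (\<Sum>i\<in>I. w i * M powr (r - 1))"
    by (intro sum_mono mult_left_mono powr_mono2) (use r nn M in auto)
  also have "\<dots> = a * M powr (r - 1)" by (simp add: a_def sum_distrib_right)
  finally have "(\<Sum>i\<in>I. w i powr r) / a \<le> M powr (r - 1)"
    using a0 unfolding a_def by (simp add: divide_le_eq mult.commute)
  then have "((\<Sum>i\<in>I. w i powr r) / a) powr (1/(r-1)) \<le> (M powr (r - 1)) powr (1/(r-1))"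
    by (intro powr_mono2) (use r a0 nn in \<open>auto simp: a_def intro!: sum_nonneg divide_nonneg_nonneg\<close>)
  also have "\<dots> = M" using r M0 by (simp add: powr_powr)
  finally show ?thesis unfolding a_def .
qed

lemma Kform:
  fixes a S q :: real
  assumes "0 < a" "0 < S" "1 < q"
  shows "(a / S powr (1/q)) powr (q/(q-1)) = a / (S/a) powr (1/(q-1))"
proof -
  have h: "ln ((a / S powr (1/q)) powr (q/(q-1))) = ln (a / (S/a) powr (1/(q-1)))"
    using assms by (simp add: ln_div ln_powr field_simps)
  have p1: "0 < (a / S powr (1/q)) powr (q/(q-1))" and p2: "0 < a / (S/a) powr (1/(q-1))"
    using assms by auto
  show ?thesis using h ln_inj_iff[OF p1 p2] by blast
qed



lemma bn_nonneg: "0 \<le> block_norm n z i"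
  unfolding block_norm_def by (simp add: sum_nonneg)

lemma mn1: "mixed_norm p n 1 z = (\<Sum>i<p. block_norm n z i)"
  unfolding mixed_norm_def using bn_nonneg by (simp add: sum_nonneg)

lemma mnr: "mixed_norm p n (ereal r) z = (\<Sum>i<p. block_norm n z i powr r) powr (1/r)"
  unfolding mixed_norm_def by simp

lemma mninf: "mixed_norm p n \<infinity> z = Max ((\<lambda>i. block_norm n z i) ` {..<p})"
  unfolding mixed_norm_def by simp

lemma kr: "q_ratio_sparsity p n (ereal r) z =
   ((\<Sum>i<p. block_norm n z i) / (\<Sum>i<p. block_norm n z i powr r) powr (1/r)) powr (r/(r-1))"
  unfolding q_ratio_sparsity_def by (simp add: mn1 mnr)

lemma kinf: "q_ratio_sparsity p n \<infinity> z =
   (\<Sum>i<p. block_norm n z i) / Max ((\<lambda>i. block_norm n z i) ` {..<p})"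
  unfolding q_ratio_sparsity_def by (simp add: mn1 mninf)

lemma exists_pos:
  assumes "0 < n" "is_vec (p * n) z" "z \<noteq> (\<lambda>_. 0)"
  shows "\<exists>i<p. 0 < block_norm n z i"
proof -
  obtain c where c: "z c \<noteq> 0" using assms(3) by auto
  have cl: "c < p * n" using assms(2) c unfolding is_vec_def by (meson not_le)
  define i where "i = c div n"
  define j where "j = c mod n"
  have cij: "c = i * n + j" unfolding i_def j_def by simp
  have ip: "i < p" unfolding i_def using cl by (simp add: less_mult_imp_div_less)
  have jn: "j < n" unfolding j_def using assms(1) by simp
  have "0 < (z (i * n + j))\<^sup>2" using c cij by simp
  also have "\<dots> \<le> (\<Sum>j<n. (z (i * n + j))\<^sup>2)"
    by (rule member_le_sum) (use jn in auto)
  finally have "0 < block_norm n z i" unfolding block_norm_def by simp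
  with ip show ?thesis by blast
qed

context
  fixes p n :: nat and z :: "nat \<Rightarrow> real" and i0 :: nat
  assumes i0: "i0 < p" and w0: "0 < block_norm n z i0"
begin

abbreviation "w \<equiv> block_norm n z"

lemma p0: "0 < p" using i0 by simp

lemma a_pos: "0 < (\<Sum>i<p. w i)"
proof -
  have "w i0 \<le> (\<Sum>i<p. w i)" by (rule member_le_sum) (use i0 bn_nonneg in auto)
  with w0 show ?thesis by simp
qed

lemma S_pos: "0 < r \<Longrightarrow> 0 < (\<Sum>i<p. w i powr r)"
proof -
  assume r: "0 < r"
  have "w i0 powr r \<le> (\<Sum>i<p. w i powr r)" by (rule member_le_sum) (use i0 in auto)
  with w0 show ?thesis by (smt (verit) powr_gt_zero)
qed

lemma M_ge: "i < p \<Longrightarrow> w i \<le> Max (w ` {..<p})"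
  by (rule Max_ge) auto

lemma M_pos: "0 < Max (w ` {..<p})"
  using M_ge[OF i0] w0 by simp

lemma V1:
  assumes "1 \<le> q2" "q2 \<le> q1"
  shows "mixed_norm p n q1 z \<le> mixed_norm p n q2 z"
proof (cases q2)
  case (real r2)
  show ?thesis
  proof (cases q1)
    case (real r1)
    then show ?thesis using assms \<open>q2 = ereal r2\<close>
      by (simp add: mnr R1 bn_nonneg)
  next
    case PInf
    have "Max (w ` {..<p}) \<le> (\<Sum>i<p. w i powr r2) powr (1/r2)"
      using p0 assms real by (subst Max_le_iff) (auto intro!: R1inf simp: bn_nonneg)
    then show ?thesis using PInf real by (simp add: mnr mninf)
  next
    case MInf
    then show ?thesis using assms by simp
  qed
next
  case PInf
  then show ?thesis using assms by simp
next
  case MInf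
  then show ?thesis using assms by simp
qed

lemma V2:
  assumes "1 < q2" "q2 \<le> q1"
  shows "q_ratio_sparsity p n q1 z \<le> q_ratio_sparsity p n q2 z"
proof (cases q2)
  case (real r2)
  have r2: "1 < r2" using assms real by simp
  have S2: "0 < (\<Sum>i<p. w i powr r2)" using S_pos r2 by simp
  have k2: "q_ratio_sparsity p n q2 z = (\<Sum>i<p. w i) / ((\<Sum>i<p. w i powr r2) / (\<Sum>i<p. w i)) powr (1/(r2-1))"
    using real kr Kform[OF a_pos S2 r2] by simp
  show ?thesis
  proof (cases q1)
    case (real r1)
    have r1: "1 < r1" "r2 \<le> r1" using assms real \<open>q2 = ereal r2\<close> by auto
    have S1: "0 < (\<Sum>i<p. w i powr r1)" using S_pos r1 by simp
    have k1: "q_ratio_sparsity p n q1 z = (\<Sum>i<p. w i) / ((\<Sum>i<p. w i powr r1) / (\<Sum>i<p. w i)) powr (1/(r1-1))"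
      using real kr Kform[OF a_pos S1 r1(1)] by simp
    have "((\<Sum>i<p. w i powr r2) / (\<Sum>i<p. w i)) powr (1/(r2-1)) \<le> ((\<Sum>i<p. w i powr r1) / (\<Sum>i<p. w i)) powr (1/(r1-1))"
      by (rule R2) (use r1 r2 a_pos bn_nonneg in auto)
    moreover have "0 < ((\<Sum>i<p. w i powr r2) / (\<Sum>i<p. w i)) powr (1/(r2-1))"
      using S2 a_pos by simp
    ultimately show ?thesis unfolding k1 k2
      by (intro divide_left_mono) (use a_pos S1 S2 in auto)
  next
    case PInf
    have "((\<Sum>i<p. w i powr r2) / (\<Sum>i<p. w i)) powr (1/(r2-1)) \<le> Max (w ` {..<p})"
      by (rule R2inf) (use r2 a_pos bn_nonneg M_ge in auto)
    moreover have "0 < ((\<Sum>i<p. w i powr r2) / (\<Sum>i<p. w i)) powr (1/(r2-1))"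
      using S2 a_pos by simp
    ultimately show ?thesis unfolding k2 PInf kinf
      by (intro divide_left_mono) (use a_pos M_pos in auto)
  next
    case MInf
    then show ?thesis using assms by simp
  qed
next
  case PInf
  then show ?thesis using assms by simp
next
  case MInf
  then show ?thesis using assms by simp
qed

lemma N_pos: "0 < r \<Longrightarrow> 0 < (\<Sum>i<p. w i powr r) powr (1/r)"
proof -
  assume "0 < r"
  then have "0 < (\<Sum>i<p. w i powr r)" by (rule S_pos)
  then show ?thesis by simp
qed

lemma V3:
  assumes "1 < q2" "q2 \<le> q1"
  shows "q_ratio_sparsity p n q2 z \<le> q_ratio_sparsity p n q1 z powr qtilde q1 q2"
proof (cases q2)
  case (real r2)
  have r2: "1 < r2" using assms real by simp
  have N2: "0 < mixed_norm p n q2 z" using N_pos[of r2] r2 real by (simp add: mnr)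
  have le: "mixed_norm p n q1 z \<le> mixed_norm p n q2 z" by (rule V1) (use assms in auto)
  have k2: "q_ratio_sparsity p n q2 z = ((\<Sum>i<p. w i) / mixed_norm p n q2 z) powr (r2/(r2-1))"
    using real by (simp add: kr mnr)
  show ?thesis
  proof (cases q1)
    case (real r1)
    have r1: "1 < r1" "r2 \<le> r1" using assms real \<open>q2 = ereal r2\<close> by auto
    have N1: "0 < mixed_norm p n q1 z" using N_pos[of r1] r1 real by (simp add: mnr)
    have "q_ratio_sparsity p n q1 z powr qtilde q1 q2
        = ((\<Sum>i<p. w i) / mixed_norm p n q1 z) powr (r1/(r1-1) * (r2 * (r1 - 1) / (r1 * (r2 - 1))))"
      using real \<open>q2 = ereal r2\<close> by (simp add: kr mnr qtilde_def powr_powr)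
    also have "r1/(r1-1) * (r2 * (r1 - 1) / (r1 * (r2 - 1))) = r2/(r2-1)"
    proof -
      have h: "r1 - 1 \<noteq> 0" "r2 - 1 \<noteq> 0" "r1 \<noteq> 0" using r1 r2 by auto
      show ?thesis using h by (simp add: divide_simps)
    qed
    finally have e: "q_ratio_sparsity p n q1 z powr qtilde q1 q2 = ((\<Sum>i<p. w i) / mixed_norm p n q1 z) powr (r2/(r2-1))" .
    show ?thesis unfolding e k2
      by (intro powr_mono2 divide_left_mono) (use r2 a_pos N1 N2 le in auto)
  next
    case PInf
    have e: "q_ratio_sparsity p n q1 z powr qtilde q1 q2 = ((\<Sum>i<p. w i) / mixed_norm p n q1 z) powr (r2/(r2-1))"
      using PInf real by (simp add: kinf mninf qtilde_def)
    show ?thesis unfolding e k2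
      by (intro powr_mono2 divide_left_mono) (use r2 a_pos M_pos PInf N2 le in \<open>auto simp: mninf\<close>)
  next
    case MInf
    then show ?thesis using assms by simp
  qed
next
  case PInf
  then have "q1 = \<infinity>" using assms by simp
  then show ?thesis using PInf by (simp add: qtilde_def)
next
  case MInf
  then show ?thesis using assms by simp
qed

lemma V4:
  assumes "1 < q" "q_ratio_sparsity p n q z \<le> t" "1 \<le> t"
  shows "(\<Sum>i<p. w i) \<le> t * mixed_norm p n q z"
proof (cases q)
  case (real r)
  have r: "1 < r" using assms real by simp
  define N where "N = mixed_norm p n q z"
  have N: "0 < N" using N_pos[of r] r real by (simp add: mnr N_def)
  have k: "q_ratio_sparsity p n q z = ((\<Sum>i<p. w i) / N) powr (r/(r-1))"
    using real by (simp add: kr mnr N_def)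
  have "(\<Sum>i<p. w i) / N = (((\<Sum>i<p. w i) / N) powr (r/(r-1))) powr ((r-1)/r)"
    using r a_pos N by (simp add: powr_powr)
  also have "\<dots> \<le> t powr ((r-1)/r)"
    by (rule powr_mono2) (use r assms k in auto)
  also have "\<dots> \<le> t powr 1"
    by (rule powr_mono) (use r assms in auto)
  also have "\<dots> = t" using assms by simp
  finally show ?thesis using N unfolding N_def by (simp add: divide_le_eq mult.commute)
next
  case PInf
  have "(\<Sum>i<p. w i) / Max (w ` {..<p}) \<le> t" using assms PInf by (simp add: kinf)
  then show ?thesis using PInf M_pos by (simp add: mninf divide_le_eq mult.commute)
next
  case MInf
  then show ?thesis using assms by simp
qed

end



lemma k_nonneg:
  assumes "i0 < p" "0 < block_norm n z i0"
  shows "0 \<le> q_ratio_sparsity p n q z"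
proof (cases "q = \<infinity>")
  case True
  then show ?thesis using a_pos[OF assms] M_pos[OF assms] by (simp add: kinf)
next
  case False
  then show ?thesis unfolding q_ratio_sparsity_def by simp
qed

lemma qt_pos:
  assumes "1 < q2" "q2 \<le> q1"
  shows "0 < qtilde q1 q2"
proof (cases q2)
  case (real r2)
  then show ?thesis using assms
    by (cases q1) (auto simp: qtilde_def intro!: divide_pos_pos mult_pos_pos)
next
  case PInf
  then have "q1 = \<infinity>" using assms by simp
  then show ?thesis using PInf by (simp add: qtilde_def)
next
  case MInf
  then show ?thesis using assms by simp
qed

lemma bn_e:
  assumes "0 < n"
  shows "block_norm n (\<lambda>c. if c = 0 then 1 else 0) i = (if i = 0 then 1 else 0)"
proof (cases "i = 0")
  case True
  have "(\<Sum>j<n. ((\<lambda>c. if c = 0 then (1::real) else 0) (i * n + j))\<^sup>2) = (\<Sum>j<n. if j = 0 then 1 else 0)"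
    using True by (intro sum.cong refl) auto
  also have "\<dots> = 1" using assms by simp
  finally show ?thesis unfolding block_norm_def using True by simp
next
  case False
  have "(\<Sum>j<n. ((\<lambda>c. if c = 0 then (1::real) else 0) (i * n + j))\<^sup>2) = 0"
    using False assms by (intro sum.neutral) auto
  then show ?thesis unfolding block_norm_def using False by simp
qed

lemma k_e:
  assumes "0 < n" "0 < p" "1 < q"
  shows "q_ratio_sparsity p n q (\<lambda>c. if c = 0 then 1 else 0) = 1"
proof -
  have a: "(\<Sum>i<p. (if i = 0 then 1 else 0::real)) = 1" using assms by simp
  show ?thesis
  proof (cases q)
    case (real r)
    have "(\<Sum>i<p. (if i = 0 then 1 else 0::real) powr r) = (\<Sum>i<p. (if i = 0 then 1 else 0::real))"
      by (intro sum.cong refl) auto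
    then show ?thesis using real a assms by (simp add: kr bn_e)
  next
    case PInf
    have "Max ((\<lambda>i. if i = 0 then 1 else 0::real) ` {..<p}) = 1"
      by (rule Max_eqI) (use assms in auto)
    then show ?thesis using PInf a assms by (simp add: kinf bn_e)
  next
    case MInf
    then show ?thesis using assms by simp
  qed
qed

theorem proposition2:
  fixes m p n :: nat and A :: "nat \<Rightarrow> nat \<Rightarrow> real" and q1 q2 :: ereal and s :: real
  assumes "0 < n"
    and "1 < q2" and "q2 \<le> q1"
    and "1 \<le> s" and "s \<le> real p powr (1 / qtilde q1 q2)"
  shows "beta m p n A q1 s \<ge> beta m p n A q2 (s powr qtilde q1 q2)
       \<and> beta m p n A q2 (s powr qtilde q1 q2)
           \<ge> s powr (- qtilde q1 q2) * beta m p n A q1 (s powr qtilde q1 q2)"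
proof -
  define qt where "qt = qtilde q1 q2"
  define t where "t = s powr qt"
  define S where "S q s' = {mat_vec_norm m (p * n) A z / mixed_norm p n q z | z.
            is_vec (p * n) z \<and> z \<noteq> (\<lambda>_. 0) \<and> q_ratio_sparsity p n q z \<le> s'}" for q s'
  have bS: "beta m p n A q s' = Inf (S q s')" for q s' unfolding beta_def S_def by simp
  have p0: "0 < p"
  proof (rule ccontr)
    assume "\<not> 0 < p"
    then have "p = 0" by simp
    then show False using assms(4,5) by simp
  qed
  have q1g: "1 < q1" using assms by simp
  have qt0: "0 < qt" unfolding qt_def using qt_pos assms by simp
  have t1: "1 \<le> t" unfolding t_def using assms(4) qt0 by (simp add: ge_one_powr_ge_zero)
  define e :: "nat \<Rightarrow> real" where "e = (\<lambda>c. if c = 0 then 1 else 0)"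
  have e_vec: "is_vec (p * n) e" "e \<noteq> (\<lambda>_. 0)"
    unfolding is_vec_def e_def using p0 assms(1) by (auto simp: fun_eq_iff)
  have ne: "S q s' \<noteq> {}" if "1 < q" "1 \<le> s'" for q s'
  proof -
    have "q_ratio_sparsity p n q e \<le> s'" using k_e[OF assms(1) p0 that(1)] that(2) by (simp add: e_def)
    then have "mat_vec_norm m (p * n) A e / mixed_norm p n q e \<in> S q s'"
      unfolding S_def mem_Collect_eq by (intro exI[of _ e]) (use e_vec in auto)
    then show ?thesis by blast
  qed
  have props: "\<exists>i0<p. 0 < block_norm n z i0" if "is_vec (p * n) z" "z \<noteq> (\<lambda>_. 0)" for z
    using exists_pos[OF assms(1) that] .
  have mpos: "0 < mixed_norm p n q z" if "i0 < p" "0 < block_norm n z i0" "1 \<le> q" for q z i0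
  proof -
    have "mixed_norm p n \<infinity> z \<le> mixed_norm p n q z" by (rule V1[OF that(1,2) that(3)]) simp
    then show ?thesis using M_pos[OF that(1,2)] by (simp add: mninf)
  qed
  have mv: "0 \<le> mat_vec_norm m (p * n) A z" for z unfolding mat_vec_norm_def by (simp add: sum_nonneg)
  have bdd: "bdd_below (S q s')" if "1 \<le> q" for q s'
    unfolding S_def bdd_below_def
  proof (intro exI[of _ 0] ballI)
    fix x assume "x \<in> {mat_vec_norm m (p * n) A z / mixed_norm p n q z | z.
            is_vec (p * n) z \<and> z \<noteq> (\<lambda>_. 0) \<and> q_ratio_sparsity p n q z \<le> s'}"
    then obtain z where x: "x = mat_vec_norm m (p * n) A z / mixed_norm p n q z"
      and z: "is_vec (p * n) z" "z \<noteq> (\<lambda>_. 0)" by blast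
    obtain i0 where "i0 < p" "0 < block_norm n z i0" using props[OF z] by blast
    then show "0 \<le> x" unfolding x using mpos[OF _ _ that] mv
      by (meson divide_nonneg_pos)
  qed
  have first: "Inf (S q2 t) \<le> Inf (S q1 s)"
  proof (rule cInf_greatest)
    show "S q1 s \<noteq> {}" using ne q1g assms(4) by simp
    fix x assume "x \<in> S q1 s"
    then obtain z where x: "x = mat_vec_norm m (p * n) A z / mixed_norm p n q1 z"
      and z: "is_vec (p * n) z" "z \<noteq> (\<lambda>_. 0)" and k: "q_ratio_sparsity p n q1 z \<le> s"
      unfolding S_def by blast
    obtain i0 where i0: "i0 < p" "0 < block_norm n z i0" using props[OF z] by blast
    have "q_ratio_sparsity p n q2 z \<le> q_ratio_sparsity p n q1 z powr qt"
      unfolding qt_def by (rule V3[OF i0 assms(2,3)])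
    also have "\<dots> \<le> t" unfolding t_def
      by (rule powr_mono2) (use qt0 k k_nonneg[OF i0] in auto)
    finally have "mat_vec_norm m (p * n) A z / mixed_norm p n q2 z \<in> S q2 t"
      unfolding S_def mem_Collect_eq by (intro exI[of _ z]) (use z in auto)
    then have "Inf (S q2 t) \<le> mat_vec_norm m (p * n) A z / mixed_norm p n q2 z"
      by (rule cInf_lower) (rule bdd, use assms in simp)
    also have "\<dots> \<le> x" unfolding x
      by (rule divide_left_mono) (use mv V1[OF i0 _ assms(3)] assms mpos[OF i0, of q1] mpos[OF i0, of q2] in auto)
    finally show "Inf (S q2 t) \<le> x" .
  qed
  have second: "(1 / t) * Inf (S q1 t) \<le> Inf (S q2 t)"
  proof (rule cInf_greatest)
    show "S q2 t \<noteq> {}" using ne assms(2) t1 by simp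
    fix x assume "x \<in> S q2 t"
    then obtain z where x: "x = mat_vec_norm m (p * n) A z / mixed_norm p n q2 z"
      and z: "is_vec (p * n) z" "z \<noteq> (\<lambda>_. 0)" and k: "q_ratio_sparsity p n q2 z \<le> t"
      unfolding S_def by blast
    obtain i0 where i0: "i0 < p" "0 < block_norm n z i0" using props[OF z] by blast
    have k1: "q_ratio_sparsity p n q1 z \<le> t" using V2[OF i0 assms(2,3)] k by simp
    then have "mat_vec_norm m (p * n) A z / mixed_norm p n q1 z \<in> S q1 t"
      unfolding S_def mem_Collect_eq by (intro exI[of _ z]) (use z in auto)
    then have "Inf (S q1 t) \<le> mat_vec_norm m (p * n) A z / mixed_norm p n q1 z"
      by (rule cInf_lower) (rule bdd, use q1g in simp)
    then have "(1 / t) * Inf (S q1 t) \<le> mat_vec_norm m (p * n) A z / (t * mixed_norm p n q1 z)"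
    proof -
      have "(1 / t) * Inf (S q1 t) = Inf (S q1 t) / t" by simp
      also have "\<dots> \<le> (mat_vec_norm m (p * n) A z / mixed_norm p n q1 z) / t"
        by (rule divide_right_mono) (use t1 \<open>Inf (S q1 t) \<le> _\<close> in auto)
      also have "\<dots> = mat_vec_norm m (p * n) A z / (t * mixed_norm p n q1 z)" by (simp add: mult.commute)
      finally show ?thesis .
    qed
    also have "\<dots> \<le> x" unfolding x
    proof (rule divide_left_mono)
      have "mixed_norm p n q2 z \<le> mixed_norm p n 1 z" by (rule V1[OF i0]) (use assms in auto)
      also have "\<dots> \<le> t * mixed_norm p n q1 z" unfolding mn1 by (rule V4[OF i0 q1g k1 t1])
      finally show "mixed_norm p n q2 z \<le> t * mixed_norm p n q1 z" .
      show "0 \<le> mat_vec_norm m (p * n) A z" by (rule mv)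
      show "0 < t * mixed_norm p n q1 z * mixed_norm p n q2 z"
        using t1 mpos[OF i0, of q1] mpos[OF i0, of q2] assms q1g by simp
    qed
    finally show "(1 / t) * Inf (S q1 t) \<le> x" .
  qed
  have "s powr (- qt) = 1 / t" unfolding t_def by (simp add: powr_minus_divide)
  then show ?thesis using first second unfolding bS t_def qt_def by simp
qed

end
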